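(* Let $\alpha \in (0,1)$ be an algebraic number with minimal pair $(p(x),q(x))$. If the additive monoid $M_\alpha = \{f(\alpha) \mid f(x) \in \mathbb{N}_0[x,x^{-1}]\}$ satisfies the ACCP, then $p(x) - Q(x)q(x) \notin \mathbb{N}_0[x,x^{-1}]$ for every nonzero Laurent polynomial $Q(x) \in \mathbb{N}_0[x,x^{-1}]$.
   Context: $\mathbb{N}_0[x,x^{-1}]$ denotes the semiring of Laurent polynomials with coefficients in $\mathbb{N}_0$. For a monic polynomial $f(x) \in \mathbb{Q}[x]$, let $\ell$ be the smallest positive integer with $\ell f(x) \in \mathbb{Z}[x]$; the minimal pair of $f$ is the unique pair $(p(x),q(x))$ with $p,q \in \mathbb{N}_0[x]$, $\ell f = p - q$, and $p,q$ having no monomials of the same degree in common. The minimal pair of a real algebraic number is the minimal pair of its minimal polynomial over $\mathbb{Q}$. A monoid $M$ satisfies the ACCP (ascending chain condition on principal ideals) if every ascending chain of principal ideals $x_1 + M \subseteq x_2 + M \subseteq \cdots$ eventually stabilizes. *)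

theory Defs
  imports "HOL-Computational_Algebra.Polynomial" "HOL-Computational_Algebra.Polynomial_Factorial"
begin

text \<open>Laurent polynomials with coefficients in a semiring are represented by their
 coefficient functions \<open>int \<Rightarrow> 'a\<close> with finite support.\<close>

definition lsupp :: "(int \<Rightarrow> 'a::zero) \<Rightarrow> int set" where
  "lsupp f = {k. f k \<noteq> 0}"

definition is_laurent :: "(int \<Rightarrow> 'a::zero) \<Rightarrow> bool" where
  "is_laurent f \<longleftrightarrow> finite (lsupp f)"

definition in_N0_laurent :: "(int \<Rightarrow> int) \<Rightarrow> bool" where
  "in_N0_laurent h \<longleftrightarrow> is_laurent h \<and> (\<forall>n. h n \<ge> 0)"

definition laurent_eval :: "(int \<Rightarrow> nat) \<Rightarrow> real \<Rightarrow> real" where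
  "laurent_eval f a = (\<Sum>k\<in>lsupp f. real (f k) * a powi k)"

definition laurent_of_poly :: "'a::zero poly \<Rightarrow> int \<Rightarrow> 'a" where
  "laurent_of_poly p n = (if n \<ge> 0 then coeff p (nat n) else 0)"

definition laurent_mult :: "(int \<Rightarrow> 'a::comm_semiring_0) \<Rightarrow> (int \<Rightarrow> 'a) \<Rightarrow> int \<Rightarrow> 'a" where
  "laurent_mult f g n = (\<Sum>k\<in>lsupp f. f k * g (n - k))"

definition M_alpha :: "real \<Rightarrow> real set" where
  "M_alpha a = {laurent_eval f a | f. is_laurent f}"

definition accp :: "real set \<Rightarrow> bool" where
  "accp M \<longleftrightarrow> (\<forall>x :: nat \<Rightarrow> real. (\<forall>n. x n \<in> M) \<and>
      (\<forall>n. (\<lambda>m. x n + m) ` M \<subseteq> (\<lambda>m. x (Suc n) + m) ` M) \<longrightarrow>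
      (\<exists>N. \<forall>n\<ge>N. (\<lambda>m. x n + m) ` M = (\<lambda>m. x N + m) ` M))"

definition is_min_poly_rat :: "real \<Rightarrow> rat poly \<Rightarrow> bool" where
  "is_min_poly_rat a f \<longleftrightarrow> lead_coeff f = 1 \<and> irreducible f \<and>
      poly (map_poly of_rat f) a = 0"

definition is_minimal_pair :: "rat poly \<Rightarrow> nat poly \<Rightarrow> nat poly \<Rightarrow> bool" where
  "is_minimal_pair f p q \<longleftrightarrow>
     (\<exists>l::nat. l = (LEAST l::nat. l > 0 \<and> (\<forall>i. coeff (smult (of_nat l) f) i \<in> \<int>)) \<and>
        smult (of_nat l) f = map_poly of_nat p - map_poly of_nat q \<and>
        (\<forall>i. coeff p i = 0 \<or> coeff q i = 0))"

end

theory Submission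
  imports Defs
begin

lemma L_eval:
  assumes "finite A" "lsupp h \<subseteq> A"
  shows "laurent_eval h a = (\<Sum>n\<in>A. real (h n) * a powi n)"
  unfolding laurent_eval_def
  by (rule sum.mono_neutral_left) (use assms in \<open>auto simp: lsupp_def\<close>)

lemma M_sum:
  assumes "finite A"
  shows "(\<Sum>n\<in>A. real (h n) * a powi n) \<in> M_alpha a"
proof -
  let ?g = "\<lambda>n. if n \<in> A then h n else 0"
  have fin: "is_laurent ?g" using assms
    unfolding is_laurent_def lsupp_def by (auto intro: finite_subset)
  have "laurent_eval ?g a = (\<Sum>n\<in>A. real (?g n) * a powi n)"
    by (rule L_eval) (use assms in \<open>auto simp: lsupp_def\<close>)
  also have "\<dots> = (\<Sum>n\<in>A. real (h n) * a powi n)" by simp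
  finally show ?thesis using fin unfolding M_alpha_def by (intro CollectI exI[of _ ?g] conjI) auto
qed

lemma M_nonneg: "a > 0 \<Longrightarrow> x \<in> M_alpha a \<Longrightarrow> x \<ge> 0"
  unfolding M_alpha_def laurent_eval_def by (auto intro!: sum_nonneg)

lemma M_zero: "0 \<in> M_alpha a"
  using M_sum[of "{}" _ a] by simp

lemma M_add:
  assumes "x \<in> M_alpha a" "y \<in> M_alpha a"
  shows "x + y \<in> M_alpha a"
proof -
  obtain f g where f: "is_laurent f" "x = laurent_eval f a"
    and g: "is_laurent g" "y = laurent_eval g a"
    using assms unfolding M_alpha_def by blast
  let ?A = "lsupp f \<union> lsupp g"
  have fin: "finite ?A" using f g unfolding is_laurent_def by auto
  have "x = (\<Sum>n\<in>?A. real (f n) * a powi n)" using f fin L_eval by blast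
  moreover have "y = (\<Sum>n\<in>?A. real (g n) * a powi n)" using g fin L_eval by blast
  ultimately have "x + y = (\<Sum>n\<in>?A. real (f n + g n) * a powi n)"
    by (simp add: sum.distrib algebra_simps)
  thus ?thesis using M_sum[OF fin, of "\<lambda>n. f n + g n" a] by simp
qed

lemma M_scale:
  assumes "x \<in> M_alpha a" "a \<noteq> 0"
  shows "a powi j * x \<in> M_alpha a"
proof -
  obtain f where f: "is_laurent f" "x = laurent_eval f a"
    using assms unfolding M_alpha_def by blast
  have fin: "finite (lsupp f)" using f unfolding is_laurent_def by auto
  have "a powi j * x = (\<Sum>n\<in>lsupp f. real (f n) * a powi (n + j))"
    using assms(2) by (simp add: f laurent_eval_def sum_distrib_left power_int_add algebra_simps)
  also have "\<dots> = (\<Sum>m\<in>(\<lambda>n. n + j) ` lsupp f. real (f (m - j)) * a powi m)"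
    by (subst sum.reindex) (auto simp: inj_on_def)
  finally show ?thesis using M_sum[of "(\<lambda>n. n + j) ` lsupp f" "\<lambda>m. f (m - j)" a] fin by simp
qed

lemma lsupp_poly: "lsupp (laurent_of_poly (p :: 'a::zero poly)) \<subseteq> int ` {..degree p}"
proof
  fix n assume "n \<in> lsupp (laurent_of_poly p)"
  hence "n \<ge> 0" "coeff p (nat n) \<noteq> 0" by (auto simp: lsupp_def laurent_of_poly_def split: if_splits)
  hence "nat n \<le> degree p" using le_degree by blast
  thus "n \<in> int ` {..degree p}" using \<open>n \<ge> 0\<close> by (auto intro!: image_eqI[of _ _ "nat n"])
qed

lemma eval_poly:
  fixes p :: "nat poly"
  shows "laurent_eval (laurent_of_poly p) a = poly (map_poly real p) a"
proof -
  have "laurent_eval (laurent_of_poly p) a = (\<Sum>n\<in>int ` {..degree p}. real (laurent_of_poly p n) * a powi n)"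
  proof (rule L_eval)
    show "lsupp (laurent_of_poly p) \<subseteq> int ` {..degree p}"
    proof
      fix n assume "n \<in> lsupp (laurent_of_poly p)"
      hence "n \<ge> 0" "coeff p (nat n) \<noteq> 0" by (auto simp: lsupp_def laurent_of_poly_def split: if_splits)
      hence "nat n \<le> degree p" using le_degree by blast
      thus "n \<in> int ` {..degree p}" using \<open>n \<ge> 0\<close> by (auto intro!: image_eqI[of _ _ "nat n"])
    qed
  qed auto
  also have "\<dots> = (\<Sum>i\<le>degree p. real (coeff p i) * a ^ i)"
    by (subst sum.reindex) (auto simp: laurent_of_poly_def power_int_of_nat)
  also have "\<dots> = poly (map_poly real p) a"
    by (simp add: poly_altdef degree_map_poly coeff_map_poly)
  finally show ?thesis .
qed

lemma common_denom:
  "finite (A::rat set) \<Longrightarrow> \<exists>d::nat. d > 0 \<and> (\<forall>x\<in>A. of_nat d * x \<in> \<int>)"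
proof (induction A rule: finite_induct)
  case empty
  then show ?case by (intro exI[of _ 1]) auto
next
  case (insert x A)
  then obtain d where d: "d > 0" "\<forall>y\<in>A. of_nat d * y \<in> \<int>" by blast
  obtain u v where uv: "quotient_of x = (u, v)" by (cases "quotient_of x")
  have v: "v > 0" using quotient_of_denom_pos[OF uv] .
  have x: "x = of_int u / of_int v" using quotient_of_div[OF uv] .
  have vx: "of_int v * x = of_int u" using v by (simp add: x)
  have "of_nat (d * nat v) * x = of_nat d * (of_int v * x)" using v by simp
  also have "\<dots> = of_int (int d * u)" by (simp add: vx)
  finally have "of_nat (d * nat v) * x = of_int (int d * u)" .
  moreover have "of_nat (d * nat v) * y \<in> \<int>" if "y \<in> A" for y
  proof -
    have "of_nat (d * nat v) * y = of_nat (nat v) * (of_nat d * y)" by simp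
    thus ?thesis using d(2) that by (metis Ints_mult Ints_of_nat)
  qed
  ultimately have "\<forall>y\<in>insert x A. of_nat (d * nat v) * y \<in> \<int>"
    by (metis Ints_of_int insert_iff)
  thus ?case using d v by (intro exI[of _ "d * nat v"]) auto
qed


lemma powi_ne_1:
  fixes a :: real
  assumes "0 < a" "a < 1" "k \<noteq> 0"
  shows "a powi k \<noteq> 1"
proof (cases "k > 0")
  case True
  have "a powi k = a ^ nat k" using True by (metis power_int_of_nat int_nat_eq less_le)
  also have "\<dots> < 1" using True assms by (simp add: power_less_one_iff)
  finally show ?thesis by simp
next
  case False
  hence "-k > 0" using assms by simp
  have "a powi (-k) = a ^ nat (-k)" using \<open>-k > 0\<close> by (metis power_int_of_nat int_nat_eq less_le)
  also have "\<dots> < 1" using \<open>-k > 0\<close> assms by (simp add: power_less_one_iff)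
  finally have "a powi (-k) < 1" .
  moreover have "a powi (-k) = inverse (a powi k)" by (simp add: power_int_minus)
  ultimately show ?thesis by auto
qed

lemma poly_nat_pos:
  fixes p :: "nat poly" and a :: real
  assumes "p \<noteq> 0" "a > 0"
  shows "poly (map_poly real p) a > 0"
proof -
  have "poly (map_poly real p) a = (\<Sum>i\<le>degree p. real (coeff p i) * a ^ i)"
    by (simp add: poly_altdef degree_map_poly coeff_map_poly)
  also have "\<dots> \<ge> real (coeff p (degree p)) * a ^ degree p"
    by (rule member_le_sum) (use assms in auto)
  moreover have "real (coeff p (degree p)) * a ^ degree p > 0"
  proof -
    have "lead_coeff p \<noteq> 0" using assms(1) by simp
    hence "real (lead_coeff p) > 0" by (metis neq0_conv of_nat_0_less_iff)
    thus ?thesis using assms(2) by simp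
  qed
  ultimately show ?thesis by linarith
qed

theorem proposition4p1:
  fixes \<alpha> :: real and f :: "rat poly" and p q :: "nat poly"
  assumes "algebraic \<alpha>" and "0 < \<alpha>" and "\<alpha> < 1"
    and "is_min_poly_rat \<alpha> f"
    and "is_minimal_pair f p q"
    and "accp (M_alpha \<alpha>)"
  shows "\<forall>Q :: int \<Rightarrow> nat. is_laurent Q \<and> Q \<noteq> (\<lambda>_. 0) \<longrightarrow>
    \<not> in_N0_laurent (\<lambda>n. int (laurent_of_poly p n) - int (laurent_mult Q (laurent_of_poly q) n))"
proof (intro allI impI notI)
  fix Q :: "int \<Rightarrow> nat"
  assume HQ: "is_laurent Q \<and> Q \<noteq> (\<lambda>_. 0)"
    and HN: "in_N0_laurent (\<lambda>n. int (laurent_of_poly p n) - int (laurent_mult Q (laurent_of_poly q) n))"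
  have a0: "\<alpha> \<noteq> 0" using assms by simp
  obtain l :: nat where l_def: "l = (LEAST l::nat. l > 0 \<and> (\<forall>i. coeff (smult (of_nat l) f) i \<in> \<int>))"
    and hl: "smult (of_nat l) f = map_poly of_nat p - map_poly of_nat q"
    and disj: "\<forall>i. coeff p i = 0 \<or> coeff q i = 0"
    using assms(5) unfolding is_minimal_pair_def by blast
  have f1: "lead_coeff f = 1" and f0: "poly (map_poly of_rat f) \<alpha> = 0"
    using assms(4) unfolding is_min_poly_rat_def by auto
  have fne: "f \<noteq> 0" using f1 by auto
  have "l > 0"
  proof -
    obtain d :: nat where d: "d > 0" "\<forall>x\<in>coeff f ` {..degree f}. of_nat d * x \<in> \<int>"
      using common_denom[of "coeff f ` {..degree f}"] by auto
    have "\<forall>i. coeff (smult (of_nat d) f) i \<in> \<int>"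
    proof
      fix i
      show "coeff (smult (of_nat d) f) i \<in> \<int>"
      proof (cases "i \<le> degree f")
        case True thus ?thesis using d by auto
      next
        case False thus ?thesis by (simp add: coeff_eq_0)
      qed
    qed
    hence "\<exists>l::nat. l > 0 \<and> (\<forall>i. coeff (smult (of_nat l) f) i \<in> \<int>)" using d by blast
    from LeastI_ex[OF this] show ?thesis unfolding l_def by blast
  qed
  have coeffeq: "real l * of_rat (coeff f i) = real (coeff p i) - real (coeff q i)" for i
  proof -
    have "coeff (smult (of_nat l) f) i = coeff (map_poly of_nat p - map_poly of_nat q) i"
      using hl by simp
    hence "of_nat l * coeff f i = of_nat (coeff p i) - (of_nat (coeff q i) :: rat)"
      by (simp add: coeff_map_poly)
    hence "of_rat (of_nat l * coeff f i) = (of_rat (of_nat (coeff p i) - of_nat (coeff q i)) :: real)"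
      by simp
    thus ?thesis by (simp add: of_rat_mult of_rat_diff)
  qed
  have "smult (real l) (map_poly of_rat f) = map_poly real p - map_poly real q"
    by (rule poly_eqI) (simp add: coeff_map_poly coeffeq)
  hence "real l * poly (map_poly of_rat f) \<alpha> = poly (map_poly real p) \<alpha> - poly (map_poly real q) \<alpha>"
    by (metis poly_smult poly_diff)
  hence pq: "poly (map_poly real p) \<alpha> = poly (map_poly real q) \<alpha>" using f0 by simp
  have qne: "q \<noteq> 0"
  proof
    assume "q = 0"
    hence "p = 0" using pq poly_nat_pos[of p \<alpha>] assms(2) by auto
    hence "smult (of_nat l) f = 0" using hl \<open>q = 0\<close> by simp
    thus False using \<open>l > 0\<close> fne by simp
  qed
  define c where "c = poly (map_poly real q) \<alpha>"
  have c0: "c > 0" unfolding c_def using poly_nat_pos[OF qne assms(2)] .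
  define g where "g = laurent_of_poly q"
  define p' where "p' = laurent_of_poly p"
  have cM: "c \<in> M_alpha \<alpha>"
  proof -
    have "finite (lsupp g)" unfolding g_def by (rule finite_subset[OF lsupp_poly]) auto
    thus ?thesis unfolding c_def M_alpha_def is_laurent_def g_def eval_poly[symmetric] by blast
  qed
  obtain k where Qk: "Q k \<noteq> 0" using HQ by auto
  have finQ: "finite (lsupp Q)" using HQ unfolding is_laurent_def by auto
  have le: "g (n - k) \<le> p' n" for n
  proof -
    have "int (p' n) - int (laurent_mult Q g n) \<ge> 0"
      using HN unfolding in_N0_laurent_def p'_def g_def by blast
    moreover have "Q k * g (n - k) \<le> laurent_mult Q g n"
      unfolding laurent_mult_def
      by (rule member_le_sum[where f = "\<lambda>j. Q j * g (n - j)"]) (use Qk finQ in \<open>auto simp: lsupp_def\<close>)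
    moreover have "g (n - k) \<le> Q k * g (n - k)" using Qk by simp
    ultimately show ?thesis by linarith
  qed
  show False
  proof (cases "k = 0")
    case True
    have "coeff q i = 0" for i
    proof -
      have "g (int i - k) \<le> p' (int i)" by (rule le)
      hence "coeff q i \<le> coeff p i" using True by (simp add: g_def p'_def laurent_of_poly_def)
      thus ?thesis using disj by (metis le_zero_eq)
    qed
    hence "q = 0" by (intro poly_eqI) simp
    thus False using qne by simp
  next
    case False
    define K where "K = \<bar>k\<bar> + int (degree p) + int (degree q)"
    define A where "A = {-K..K}"
    have finA: "finite A" unfolding A_def by simp
    have Pc: "c = (\<Sum>n\<in>A. real (p' n) * \<alpha> powi n)"
    proof -
      have "c = laurent_eval p' \<alpha>" unfolding c_def p'_def eval_poly pq[symmetric] ..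
      also have "\<dots> = (\<Sum>n\<in>A. real (p' n) * \<alpha> powi n)"
      proof (rule L_eval[OF finA])
        show "lsupp p' \<subseteq> A"
        proof
          fix n assume "n \<in> lsupp p'"
          then obtain i where "i \<le> degree p" "n = int i" using lsupp_poly[of p] unfolding p'_def by blast
          thus "n \<in> A" unfolding A_def K_def by simp arith
        qed
      qed
      finally show ?thesis .
    qed
    have Sh: "(\<Sum>n\<in>A. real (g (n - k)) * \<alpha> powi n) = \<alpha> powi k * c"
    proof -
      have "(\<Sum>n\<in>A. real (g (n - k)) * \<alpha> powi n) = (\<Sum>n\<in>A. \<alpha> powi k * (real (g (n - k)) * \<alpha> powi (n - k)))"
        by (rule sum.cong) (use a0 in \<open>auto simp: power_int_diff field_simps\<close>)
      also have "\<dots> = \<alpha> powi k * (\<Sum>n\<in>A. real (g (n - k)) * \<alpha> powi (n - k))"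
        by (simp add: sum_distrib_left)
      also have "(\<Sum>n\<in>A. real (g (n - k)) * \<alpha> powi (n - k)) = (\<Sum>m\<in>(\<lambda>n. n - k) ` A. real (g m) * \<alpha> powi m)"
        by (subst sum.reindex) (auto simp: inj_on_def)
      also have "\<dots> = laurent_eval g \<alpha>"
      proof (rule L_eval[symmetric])
        show "finite ((\<lambda>n. n - k) ` A)" using finA by simp
        show "lsupp g \<subseteq> (\<lambda>n. n - k) ` A"
        proof
          fix n assume "n \<in> lsupp g"
          then obtain i where i: "i \<le> degree q" "n = int i" using lsupp_poly[of q] unfolding g_def by blast
          have "n + k \<in> A" unfolding A_def K_def using i by simp arith
          thus "n \<in> (\<lambda>n. n - k) ` A" by (intro image_eqI[of _ _ "n + k"]) auto
        qed
      qed
      also have "\<dots> = c" unfolding g_def c_def eval_poly ..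
      finally show ?thesis .
    qed
    define rest where "rest = (\<Sum>n\<in>A. real (p' n - g (n - k)) * \<alpha> powi n)"
    have restM: "rest \<in> M_alpha \<alpha>" unfolding rest_def by (rule M_sum[OF finA])
    have rest_eq: "rest = c - \<alpha> powi k * c"
    proof -
      have "rest = (\<Sum>n\<in>A. real (p' n) * \<alpha> powi n) - (\<Sum>n\<in>A. real (g (n - k)) * \<alpha> powi n)"
        unfolding rest_def using le by (simp add: of_nat_diff sum_subtractf left_diff_distrib)
      thus ?thesis by (simp only: Pc[symmetric] Sh)
    qed
    have rest0: "rest \<noteq> 0"
      using powi_ne_1[OF assms(2,3) False] c0 unfolding rest_eq by auto
    have restpos: "rest \<ge> 0" using M_nonneg[OF assms(2) restM] .
    define x where "x j = \<alpha> powi (int j * k) * c" for j :: nat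
    have xM: "x j \<in> M_alpha \<alpha>" for j unfolding x_def using M_scale[OF cM a0] .
    have xrec: "x j = x (Suc j) + \<alpha> powi (int j * k) * rest" for j
    proof -
      have "\<alpha> powi (int (Suc j) * k) = \<alpha> powi (int j * k) * \<alpha> powi k"
        using a0 by (simp add: distrib_right power_int_add)
      thus ?thesis unfolding x_def rest_eq by (simp add: algebra_simps)
    qed
    have incl: "(\<lambda>m. x j + m) ` M_alpha \<alpha> \<subseteq> (\<lambda>m. x (Suc j) + m) ` M_alpha \<alpha>" for j
    proof
      fix y assume "y \<in> (\<lambda>m. x j + m) ` M_alpha \<alpha>"
      then obtain m where m: "m \<in> M_alpha \<alpha>" "y = x j + m" by blast
      have "\<alpha> powi (int j * k) * rest + m \<in> M_alpha \<alpha>"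
        by (rule M_add[OF M_scale[OF restM a0] m(1)])
      moreover have "y = x (Suc j) + (\<alpha> powi (int j * k) * rest + m)"
        using m(2) xrec[of j] by simp
      ultimately show "y \<in> (\<lambda>m. x (Suc j) + m) ` M_alpha \<alpha>" by blast
    qed
    obtain N where N: "\<forall>n\<ge>N. (\<lambda>m. x n + m) ` M_alpha \<alpha> = (\<lambda>m. x N + m) ` M_alpha \<alpha>"
      using assms(6) xM incl unfolding accp_def by blast
    have "x (Suc N) + 0 \<in> (\<lambda>m. x (Suc N) + m) ` M_alpha \<alpha>" using M_zero by blast
    hence "x (Suc N) \<in> (\<lambda>m. x N + m) ` M_alpha \<alpha>" using N[rule_format, of "Suc N"] by simp
    then obtain m where m: "m \<in> M_alpha \<alpha>" "x (Suc N) = x N + m" by blast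
    have m0: "m \<ge> 0" using M_nonneg[OF assms(2) m(1)] .
    have "\<alpha> powi (int N * k) * rest + m = 0" using m(2) xrec[of N] by simp
    moreover have "\<alpha> powi (int N * k) * rest \<ge> 0" using restpos assms(2) by simp
    ultimately have "\<alpha> powi (int N * k) * rest = 0" using m0 by linarith
    thus False using rest0 a0 by simp
  qed
qed

end
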